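(* There exist neuronal networks $\mathcal N$ all of whose neurons satisfy Dale's Principle (each neuron is excitatory or inhibitory) but which are not a dynamical optimum conditioned to their synaptical equivalence class, i.e. there is a network $\mathcal N'$ synaptically equivalent to $\mathcal N$ with $\mathcal N'\not\sqsubseteq\mathcal N$.
   Context: A neuronal network $\mathcal N$ consists of $N\ge2$ neurons $i$. Neuron $i$ has a state $x_i=(x_{i,1},\dots,x_{i,k_i})$ in a compact manifold $M_i$ of finite dimension $k_i\ge1$, $x_{i,1}$ being its membrane potential; it has a threshold $\theta_i>0$ and a Lipschitz vector field $f_i$, and isolated it evolves by $dx_i/dt=F_i(x_i):=f_i(x_i)-\vec\theta_i\delta_{\theta_i}(x_{i,1})$, i.e. $\dot x_i=f_i(x_i)$ while $x_{i,1}<\theta_i$, and $x_{i,1}$ is reset to $0$ when it reaches $\theta_i$ (spike). For $i\neq j$ the synaptic action $\Delta_{i,j}$ is a real function of $x_j$, identically $0$ or of constant sign; when $i$ spikes, $x_{j,1}$ jumps by $\Delta_{i,j}$. The network evolves by $dx_j/dt=F_j(x_j)+\sum_{i\ne j}\vec\Delta_{i,j}\delta_{\theta_i}(x_{i,1})$ with the refractory/avalanche rule (a neuron pushed to its threshold by simultaneous actions spikes at that instant; each neuron spikes at most once per instant and ignores actions arriving at the instant it spikes). For every $X_0\in M:=M_1\times\cdots\times M_N$ the solution is assumed to exist and be unique, defining the dynamics $\Phi(X_0,t)$, $t\ge0$. No neuron is indifferent: for each $i$ some $\Delta_{i,j}\not\equiv0$. A neuron $i$ is excitatory (resp. inhibitory)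 if $\Delta_{i,j}>0$ (resp. $\Delta_{i,j}<0$) for every $j$ with $\Delta_{i,j}\not\equiv0$; it is mixed if it is neither. Dale's Principle: no neuron is mixed. Two neurons $i\ne j$ are structurally identical if $F_i=F_j$, $\Delta_{i,j}\equiv\Delta_{j,i}\equiv0$ and $\Delta_{h,i}=\Delta_{h,j}$ for all $h\ne i,j$. A homogeneous part is a maximal set of pairwise structurally identical neurons. A synaptical unit is a block of a partition of a homogeneous part $A$ into a minimal number of sets $U$ such that for each neuron $h\notin A$ at most one $i\in U$ has $\Delta_{i,h}\not\equiv0$. For a unit $U$ and homogeneous part $B$, $\Delta_{U,B}$ denotes $0$ if $\Delta_{i,h}\equiv0$ for all $i\in U,h\in B$, and otherwise the common value $\Delta_{i,h}$ ($h\in B$) for the unique $i\in U$ sending nonzero actions to $B$. Networks $\mathcal N,\mathcal N'$ are synaptically equivalent if they have the same number of homogeneous parts and the same number of synaptical units, and there is a bijection $\varphi$ from the units of $\mathcal N$ onto the units of $\mathcal N'$ mapping the units of each homogeneous part $B$ onto all units of a homogeneous part $\varphi(B)$ of $\mathcal N'$, such that $\Delta_{U,B}=\Delta_{\varphi(U),\varphi(B)}$ for all units $U$ and parts $B$, and $F_i=F_{i'}$ for all $i\in U$, $i'\in\varphi(U)$. $\mathcal N'\sqsubseteq\mathcal N$ means: there is a continuous injective $\psi:M'\to M$ with $\psi(\Phi'(X'_0,t))=\Phi(\psi(X'_0),t)$ for all $X'_0\in M'$, $t\ge0$, where $\Phi,\Phi'$ are the dynamics of $\mathcal N,\mathcal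 N'$ on $M,M'$. A network $\mathcal N$ is a dynamical optimum conditioned to its synaptical equivalence class $\mathcal C$ if $\mathcal N'\sqsubseteq\mathcal N$ for all $\mathcal N'\in\mathcal C$. *)

theory Defs
  imports "HOL-Analysis.Analysis"
begin

text \<open>
Neurons are indexed 0..<nn N.  The state of a neuron with
dimension k is an element of nat => real vanishing outside {0..<k}
(a vector of R^k); coordinate 0 is the membrane potential.  A network state
is a function nat => (nat => real) vanishing for neurons >= nn N.
Topologies are the product topologies (for these extensional functions this
is the Euclidean topology of the finite product).
\<close>

record network =
  nn  :: nat
  dim :: "nat \<Rightarrow> nat"
  sp  :: "nat \<Rightarrow> (nat \<Rightarrow> real) set"
  thr :: "nat \<Rightarrow> real"
  fld :: "nat \<Rightarrow> (nat \<Rightarrow> real) \<Rightarrow> (nat \<Rightarrow> real)"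
  syn :: "nat \<Rightarrow> nat \<Rightarrow> (nat \<Rightarrow> real) \<Rightarrow> real"        \<comment> \<open>Delta_{i,j} as function of x_j\<close>

definition Rk :: "nat \<Rightarrow> (nat \<Rightarrow> real) set" where
  "Rk k = {y. \<forall>c\<ge>k. y c = 0}"

definition halfspace :: "nat \<Rightarrow> (nat \<Rightarrow> real) set" where
  "halfspace k = {y \<in> Rk k. y 0 \<ge> 0}"

definition is_manifold :: "nat \<Rightarrow> (nat \<Rightarrow> real) set \<Rightarrow> bool" where
  "is_manifold k M \<longleftrightarrow> M \<subseteq> Rk k \<and>
     (\<forall>x\<in>M. \<exists>U V. openin (top_of_set M) U \<and> x \<in> U \<and>
        openin (top_of_set (halfspace k)) V \<and> U homeomorphic V)"

definition edist :: "nat \<Rightarrow> (nat \<Rightarrow> real) \<Rightarrow> (nat \<Rightarrow> real) \<Rightarrow> real" where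
  "edist k x y = sqrt (\<Sum>c<k. (x c - y c)^2)"

definition lipschitz_field :: "nat \<Rightarrow> (nat \<Rightarrow> real) set \<Rightarrow> ((nat \<Rightarrow> real) \<Rightarrow> (nat \<Rightarrow> real)) \<Rightarrow> bool" where
  "lipschitz_field k M f \<longleftrightarrow> (\<exists>L. \<forall>x\<in>M. \<forall>y\<in>M. edist k (f x) (f y) \<le> L * edist k x y)"

definition nz :: "network \<Rightarrow> nat \<Rightarrow> nat \<Rightarrow> bool" where
  "nz N i j \<longleftrightarrow> (\<exists>x\<in>sp N j. syn N i j x \<noteq> 0)"

definition neurons :: "network \<Rightarrow> nat set" where
  "neurons N = {..<nn N}"

definition Mtot :: "network \<Rightarrow> (nat \<Rightarrow> nat \<Rightarrow> real) set" where
  "Mtot N = {X. (\<forall>i<nn N. X i \<in> sp N i) \<and> (\<forall>i\<ge>nn N. X i = (\<lambda>_. 0))}"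

definition aval_step :: "network \<Rightarrow> (nat \<Rightarrow> nat \<Rightarrow> real) \<Rightarrow> nat set \<Rightarrow> nat set" where
  "aval_step N Y J = J \<union> {j. j < nn N \<and> Y j 0 + (\<Sum>i\<in>J - {j}. syn N i j (Y j)) \<ge> thr N j}"

definition spikers :: "network \<Rightarrow> (nat \<Rightarrow> nat \<Rightarrow> real) \<Rightarrow> nat set" where
  "spikers N Y = (\<Union>n. (aval_step N Y ^^ n) {})"

definition jump :: "network \<Rightarrow> (nat \<Rightarrow> nat \<Rightarrow> real) \<Rightarrow> (nat \<Rightarrow> nat \<Rightarrow> real)" where
  "jump N Y = (\<lambda>j. if j < nn N then
       (if j \<in> spikers N Y then (Y j)(0 := 0)
        else (Y j)(0 := Y j 0 + (\<Sum>i\<in>spikers N Y. syn N i j (Y j))))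
     else Y j)"

definition solution :: "network \<Rightarrow> (nat \<Rightarrow> nat \<Rightarrow> real) \<Rightarrow> (real \<Rightarrow> nat \<Rightarrow> nat \<Rightarrow> real) \<Rightarrow> bool" where
  "solution N X0 X \<longleftrightarrow>
     (\<forall>t\<ge>0. X t \<in> Mtot N) \<and>
     X 0 = jump N X0 \<and>
     (\<forall>t>0. \<exists>Y. (X \<longlongrightarrow> Y) (at_left t) \<and> X t = jump N Y) \<and>
     (\<forall>t\<ge>0. \<forall>i<nn N. \<forall>c<dim N i.
        ((\<lambda>s. X s i c) has_real_derivative fld N i (X t i) c) (at t within {t..}))"

definition dyn :: "network \<Rightarrow> (nat \<Rightarrow> nat \<Rightarrow> real) \<Rightarrow> real \<Rightarrow> (nat \<Rightarrow> nat \<Rightarrow> real)" where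
  "dyn N X0 = (THE Z. \<exists>X. solution N X0 X \<and> Z = (\<lambda>t. if t \<ge> 0 then X t else undefined))"

definition admissible :: "network \<Rightarrow> bool" where
  "admissible N \<longleftrightarrow>
     nn N \<ge> 2 \<and>
     (\<forall>i<nn N. dim N i \<ge> 1 \<and> sp N i \<noteq> {} \<and> compact (sp N i) \<and>
        is_manifold (dim N i) (sp N i) \<and> thr N i > 0 \<and>
        lipschitz_field (dim N i) (sp N i) (fld N i)) \<and>
     (\<forall>i<nn N. \<forall>j<nn N. i \<noteq> j \<longrightarrow>
        (\<forall>x\<in>sp N j. syn N i j x = 0) \<or> (\<forall>x\<in>sp N j. syn N i j x > 0) \<or>
        (\<forall>x\<in>sp N j. syn N i j x < 0)) \<and>
     (\<forall>i<nn N. \<exists>j<nn N. j \<noteq> i \<and> nz N i j) \<and>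
     (\<forall>X0\<in>Mtot N. \<exists>X. solution N X0 X) \<and>
     (\<forall>X0\<in>Mtot N. \<forall>X Y. solution N X0 X \<longrightarrow> solution N X0 Y \<longrightarrow> (\<forall>t\<ge>0. X t = Y t))"

definition excitatory :: "network \<Rightarrow> nat \<Rightarrow> bool" where
  "excitatory N i \<longleftrightarrow> (\<forall>j<nn N. j \<noteq> i \<longrightarrow> nz N i j \<longrightarrow> (\<forall>x\<in>sp N j. syn N i j x > 0))"

definition inhibitory :: "network \<Rightarrow> nat \<Rightarrow> bool" where
  "inhibitory N i \<longleftrightarrow> (\<forall>j<nn N. j \<noteq> i \<longrightarrow> nz N i j \<longrightarrow> (\<forall>x\<in>sp N j. syn N i j x < 0))"

definition dale :: "network \<Rightarrow> bool" where
  "dale N \<longleftrightarrow> (\<forall>i<nn N. excitatory N i \<or> inhibitory N i)"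

definition sameF :: "network \<Rightarrow> nat \<Rightarrow> network \<Rightarrow> nat \<Rightarrow> bool" where
  "sameF N i N' i' \<longleftrightarrow> dim N i = dim N' i' \<and> sp N i = sp N' i' \<and> thr N i = thr N' i' \<and>
     (\<forall>x\<in>sp N i. \<forall>c<dim N i. fld N i x c = fld N' i' x c)"

definition struct_ident :: "network \<Rightarrow> nat \<Rightarrow> nat \<Rightarrow> bool" where
  "struct_ident N i j \<longleftrightarrow> i \<noteq> j \<and> i < nn N \<and> j < nn N \<and> sameF N i N j \<and>
     \<not> nz N i j \<and> \<not> nz N j i \<and>
     (\<forall>h<nn N. h \<noteq> i \<longrightarrow> h \<noteq> j \<longrightarrow> (\<forall>x\<in>sp N i. syn N h i x = syn N h j x))"

definition homog_part :: "network \<Rightarrow> nat set \<Rightarrow> bool" where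
  "homog_part N A \<longleftrightarrow> A \<noteq> {} \<and> A \<subseteq> neurons N \<and>
     (\<forall>i\<in>A. \<forall>j\<in>A. i \<noteq> j \<longrightarrow> struct_ident N i j) \<and>
     (\<forall>B. A \<subseteq> B \<longrightarrow> B \<subseteq> neurons N \<longrightarrow> (\<forall>i\<in>B. \<forall>j\<in>B. i \<noteq> j \<longrightarrow> struct_ident N i j) \<longrightarrow> B = A)"

definition parts :: "network \<Rightarrow> nat set set" where
  "parts N = {A. homog_part N A}"

definition unit_partition :: "network \<Rightarrow> nat set \<Rightarrow> nat set set \<Rightarrow> bool" where
  "unit_partition N A P \<longleftrightarrow> \<Union>P = A \<and> {} \<notin> P \<and>
     (\<forall>U\<in>P. \<forall>V\<in>P. U \<noteq> V \<longrightarrow> U \<inter> V = {}) \<and>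
     (\<forall>U\<in>P. \<forall>h\<in>neurons N - A. card {i\<in>U. nz N i h} \<le> 1)"

definition min_unit_partition :: "network \<Rightarrow> nat set \<Rightarrow> nat set set \<Rightarrow> bool" where
  "min_unit_partition N A P \<longleftrightarrow> unit_partition N A P \<and>
     (\<forall>Q. unit_partition N A Q \<longrightarrow> card P \<le> card Q)"

definition unit_choice :: "network \<Rightarrow> (nat set \<Rightarrow> nat set set) \<Rightarrow> bool" where
  "unit_choice N UP \<longleftrightarrow> (\<forall>A\<in>parts N. min_unit_partition N A (UP A))"

definition units :: "network \<Rightarrow> (nat set \<Rightarrow> nat set set) \<Rightarrow> nat set set" where
  "units N UP = (\<Union>A\<in>parts N. UP A)"

definition unit_delta :: "network \<Rightarrow> nat set \<Rightarrow> nat set \<Rightarrow> (nat \<Rightarrow> real) \<Rightarrow> real" where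
  "unit_delta N U B =
     (if \<exists>i\<in>U. \<exists>h\<in>B. nz N i h then
        (let i = (SOME i. i \<in> U \<and> (\<exists>h\<in>B. nz N i h));
             h = (SOME h. h \<in> B \<and> nz N i h) in syn N i h)
      else (\<lambda>_. 0))"

definition syn_equiv :: "network \<Rightarrow> network \<Rightarrow> bool" where
  "syn_equiv N N' \<longleftrightarrow> (\<exists>UP UP' \<phi> \<phi>B.
     unit_choice N UP \<and> unit_choice N' UP' \<and>
     card (parts N) = card (parts N') \<and> card (units N UP) = card (units N' UP') \<and>
     bij_betw \<phi> (units N UP) (units N' UP') \<and>
     bij_betw \<phi>B (parts N) (parts N') \<and>
     (\<forall>B\<in>parts N. \<phi> ` UP B = UP' (\<phi>B B)) \<and>
     (\<forall>U\<in>units N UP. \<forall>B\<in>parts N. \<forall>h\<in>B. \<forall>x\<in>sp N h.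
        unit_delta N U B x = unit_delta N' (\<phi> U) (\<phi>B B) x) \<and>
     (\<forall>U\<in>units N UP. \<forall>i\<in>U. \<forall>i'\<in>\<phi> U. sameF N i N' i'))"

text \<open>embeds N' N  means  N' \<sqsubseteq> N.\<close>
definition embeds :: "network \<Rightarrow> network \<Rightarrow> bool" where
  "embeds N' N \<longleftrightarrow> (\<exists>\<psi>. continuous_on (Mtot N') \<psi> \<and> inj_on \<psi> (Mtot N') \<and>
     \<psi> ` Mtot N' \<subseteq> Mtot N \<and>
     (\<forall>X0\<in>Mtot N'. \<forall>t\<ge>0. \<psi> (dyn N' X0 t) = dyn N (\<psi> X0) t))"

definition dynamical_optimum :: "network \<Rightarrow> bool" where
  "dynamical_optimum N \<longleftrightarrow> (\<forall>N'. admissible N' \<longrightarrow> syn_equiv N N' \<longrightarrow> embeds N' N)"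

end

theory Submission
  imports Defs
begin



definition hh :: "real \<Rightarrow> nat \<Rightarrow> real" where
  "hh r = (\<lambda>c. if c = 0 then r else 0)"

definition I1 :: "(nat \<Rightarrow> real) set" where
  "I1 = {y. (\<forall>c\<ge>1. y c = 0) \<and> 0 \<le> y 0 \<and> y 0 \<le> 1}"

lemma cont_coord: "continuous_on S (\<lambda>x::'a\<Rightarrow>'b::topological_space. x i)"
  by (rule continuous_on_subset[OF continuous_on_product_coordinates]) simp

lemma cont_coord2: "continuous_on S (\<lambda>x::'a\<Rightarrow>'b\<Rightarrow>'c::topological_space. x i j)"
  using continuous_on_product_then_coordinatewise[OF cont_coord[of S i]] by simp

lemma cont_hh: "continuous_on S hh"
  unfolding hh_def
  by (intro continuous_on_coordinatewise_then_product, case_tac "i = 0") (auto intro: continuous_intros)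

lemma I1_eq: "I1 = hh ` {0..1}"
proof
  show "I1 \<subseteq> hh ` {0..1}"
  proof
    fix y assume y: "y \<in> I1"
    have "y = hh (y 0)" using y by (auto simp: I1_def hh_def fun_eq_iff)
    thus "y \<in> hh ` {0..1}" using y by (auto simp: I1_def)
  qed
qed (auto simp: I1_def hh_def)

lemma compact_I1: "compact I1"
  unfolding I1_eq by (intro compact_continuous_image cont_hh compact_Icc)

lemma I1_ne: "I1 \<noteq> {}"
  unfolding I1_eq by auto

lemma I1_Rk: "I1 \<subseteq> Rk 1"
  by (auto simp: I1_def Rk_def)

definition flip :: "(nat \<Rightarrow> real) \<Rightarrow> (nat \<Rightarrow> real)" where
  "flip y = y(0 := 1 - y 0)"

lemma cont_flip: "continuous_on S flip"
  unfolding flip_def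
  by (intro continuous_on_coordinatewise_then_product, case_tac "i = 0")
     (auto intro!: continuous_intros cont_coord)

lemma open_lt1: "open {y::nat\<Rightarrow>real. y 0 < 1}"
  by (rule open_Collect_less) (auto intro: cont_coord continuous_intros)

lemma open_gt0: "open {y::nat\<Rightarrow>real. 0 < y 0}"
  by (rule open_Collect_less) (auto intro: cont_coord continuous_intros)

lemma manifold_I1: "is_manifold 1 I1"
  unfolding is_manifold_def
proof (intro conjI ballI)
  show "I1 \<subseteq> Rk 1" by (rule I1_Rk)
  fix x assume x: "x \<in> I1"
  define U1 where "U1 = I1 \<inter> {y. y 0 < 1}"
  define U2 where "U2 = I1 \<inter> {y. 0 < y 0}"
  have o1: "openin (top_of_set I1) U1" unfolding U1_def using open_lt1 by (auto simp: openin_open_Int)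
  have o2: "openin (top_of_set I1) U2" unfolding U2_def using open_gt0 by (auto simp: openin_open_Int)
  have U1h: "U1 = halfspace 1 \<inter> {y. y 0 < 1}"
    by (auto simp: U1_def I1_def halfspace_def Rk_def)
  have o1h: "openin (top_of_set (halfspace 1)) U1" unfolding U1h using open_lt1 by (auto simp: openin_open_Int)
  have ff: "flip (flip y) = y" for y by (auto simp: flip_def fun_eq_iff)
  have f12: "flip ` U2 \<subseteq> U1" by (auto simp: U1_def U2_def I1_def flip_def)
  have f21: "flip ` U1 \<subseteq> U2" by (auto simp: U1_def U2_def I1_def flip_def)
  have "homeomorphism U2 U1 flip flip"
    unfolding homeomorphism_def
  proof (intro conjI cont_flip ballI)
    show "flip ` U2 = U1"
    proof
      show "U1 \<subseteq> flip ` U2"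
      proof
        fix y assume "y \<in> U1" then have "flip y \<in> U2" using f21 by auto
        then show "y \<in> flip ` U2" using ff[of y] by (metis image_eqI)
      qed
    qed (rule f12)
    show "flip ` U1 = U2"
    proof
      show "U2 \<subseteq> flip ` U1"
      proof
        fix y assume "y \<in> U2" then have "flip y \<in> U1" using f12 by auto
        then show "y \<in> flip ` U1" using ff[of y] by (metis image_eqI)
      qed
    qed (rule f21)
  qed (simp_all add: ff)
  then have h2: "U2 homeomorphic U1" unfolding homeomorphic_def by blast
  show "\<exists>U V. openin (top_of_set I1) U \<and> x \<in> U \<and> openin (top_of_set (halfspace 1)) V \<and> U homeomorphic V"
  proof (cases "x 0 < 1")
    case True
    then show ?thesis using o1 o1h x by (auto simp: U1_def intro!: exI[of _ U1] homeomorphic_refl)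
  next
    case False
    then have "x \<in> U2" using x by (auto simp: U2_def)
    then show ?thesis using o2 o1h h2 by blast
  qed
qed




lemma rderiv_zero_bound:
  fixes g :: "real \<Rightarrow> real"
  assumes ab: "a \<le> b" and cont: "continuous_on {a..b} g"
    and der: "\<And>t. t \<in> {a..<b} \<Longrightarrow> (g has_real_derivative 0) (at t within {t..})"
    and e: "e > 0"
  shows "\<bar>g b - g a\<bar> \<le> e * (b - a)"
proof -
  define S where "S = {t \<in> {a..b}. \<bar>g t - g a\<bar> \<le> e * (t - a)}"
  have clS: "closed S" unfolding S_def
    by (intro continuous_on_closed_Collect_le continuous_intros cont)
  have aS: "a \<in> S" using ab by (auto simp: S_def)
  have bdd: "bdd_above S" by (auto simp: S_def bdd_above_def)
  define c where "c = Sup S"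
  have cS: "c \<in> S" unfolding c_def using clS aS bdd closed_contains_Sup by blast
  have cb: "c \<le> b" using cS by (auto simp: S_def)
  show ?thesis
  proof (cases "c = b")
    case True then show ?thesis using cS by (auto simp: S_def)
  next
    case False
    with cb have cb': "c < b" by simp
    have ca: "a \<le> c" using cS by (auto simp: S_def)
    have "((\<lambda>y. (g y - g c) / (y - c)) \<longlongrightarrow> 0) (at c within {c..})"
      using der[of c] ca cb' by (simp add: has_field_derivative_iff)
    then have "\<forall>\<^sub>F y in at c within {c..}. dist ((g y - g c) / (y - c)) 0 < e"
      using e tendstoD by blast
    then obtain d where d: "d > 0" and dd: "\<And>y. y \<in> {c..} \<Longrightarrow> y \<noteq> c \<Longrightarrow> dist y c < d \<Longrightarrow>
        dist ((g y - g c) / (y - c)) 0 < e"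
      unfolding eventually_at by blast
    define y where "y = min (c + d/2) b"
    have yc: "y > c" using d cb' by (auto simp: y_def)
    have yb: "y \<le> b" by (simp add: y_def)
    have "dist y c < d" using d yc by (auto simp: y_def dist_real_def)
    then have "\<bar>(g y - g c) / (y - c)\<bar> < e" using dd[of y] yc by auto
    then have "\<bar>g y - g c\<bar> < e * (y - c)" using yc by (simp add: abs_divide divide_less_eq)
    moreover have "\<bar>g c - g a\<bar> \<le> e * (c - a)" using cS by (auto simp: S_def)
    ultimately have "\<bar>g y - g a\<bar> \<le> e * (y - a)" by (simp add: algebra_simps)
    then have "y \<in> S" using yb yc ca by (auto simp: S_def)
    then have "y \<le> c" unfolding c_def using bdd by (rule cSup_upper)
    then show ?thesis using yc by simp
  qed
qed

lemma rderiv_zero_const: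
  fixes g :: "real \<Rightarrow> real"
  assumes ab: "a \<le> b" and cont: "continuous_on {a..b} g"
    and der: "\<And>t. t \<in> {a..<b} \<Longrightarrow> (g has_real_derivative 0) (at t within {t..})"
  shows "g b = g a"
proof -
  have "\<bar>g b - g a\<bar> \<le> e * (b - a)" if "e > 0" for e
    using rderiv_zero_bound[OF ab cont der that] by simp
  show ?thesis
  proof (rule ccontr)
    assume ne: "g b \<noteq> g a"
    then have ba: "b - a > 0" using \<open>\<And>e. e>0 \<Longrightarrow> _\<close>[of 1] ab by (cases "a = b") auto
    define e where "e = \<bar>g b - g a\<bar> / (2 * (b - a))"
    have "e > 0" using ne ba by (auto simp: e_def)
    then have "\<bar>g b - g a\<bar> \<le> e * (b - a)" using \<open>\<And>e. e>0 \<Longrightarrow> _\<close> by blast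
    also have "\<dots> = \<bar>g b - g a\<bar> / 2" using ba by (simp add: e_def field_simps)
    finally show False using ne by simp
  qed
qed




definition mk :: "nat \<Rightarrow> (nat \<Rightarrow> nat \<Rightarrow> bool) \<Rightarrow> (nat \<Rightarrow> real) \<Rightarrow> network" where
  "mk n E T = \<lparr>nn = n, dim = (\<lambda>_. 1), sp = (\<lambda>_. I1), thr = T, fld = (\<lambda>_ _ _. 0),
      syn = (\<lambda>i j x. if E i j then 1 else 0)\<rparr>"

lemma mk_simps[simp]: "nn (mk n E T) = n" "dim (mk n E T) i = 1" "sp (mk n E T) i = I1"
  "thr (mk n E T) i = T i" "fld (mk n E T) i x c = 0" "syn (mk n E T) i j x = (if E i j then 1 else 0)"
  by (simp_all add: mk_def)

lemma nz_mk[simp]: "nz (mk n E T) i j \<longleftrightarrow> E i j"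
  using I1_ne by (auto simp: nz_def)

lemma spikers_mk:
  assumes "\<And>j. j < n \<Longrightarrow> Y j 0 < T j"
  shows "spikers (mk n E T) Y = {}"
proof -
  have "(aval_step (mk n E T) Y ^^ k) {} = {}" for k
  proof (induction k)
    case (Suc k) then show ?case using assms by (auto simp: aval_step_def not_le)
  qed simp
  then show ?thesis by (simp add: spikers_def)
qed

lemma jump_mk:
  assumes "\<And>j. j < n \<Longrightarrow> Y j 0 < T j"
  shows "jump (mk n E T) Y = Y"
  using spikers_mk[of n Y T E] assms by (auto simp: jump_def fun_eq_iff)

lemma Mtot_mk_le: "X \<in> Mtot (mk n E T) \<Longrightarrow> j < n \<Longrightarrow> 0 \<le> X j 0 \<and> X j 0 \<le> 1"
  by (auto simp: Mtot_def I1_def)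

lemma Mtot_mk_eq:
  assumes "X \<in> Mtot (mk n E T)" "Y \<in> Mtot (mk n E T)" "\<And>j. j < n \<Longrightarrow> X j 0 = Y j 0"
  shows "X = Y"
proof (rule ext)+
  fix j c
  show "X j c = Y j c"
  proof (cases "j < n")
    case True
    then have "X j \<in> I1" "Y j \<in> I1" using assms by (auto simp: Mtot_def)
    then show ?thesis using assms(3)[OF True] by (cases "c = 0") (auto simp: I1_def)
  next
    case False then show ?thesis using assms by (auto simp: Mtot_def)
  qed
qed

lemma Mtot_mk_lt: "X \<in> Mtot (mk n E T) \<Longrightarrow> (\<And>i. T i > 1) \<Longrightarrow> j < n \<Longrightarrow> X j 0 < T j"
  using Mtot_mk_le[of X n E T j] by (meson le_less_trans)

lemma tendsto_coord2: "(X \<longlongrightarrow> Y) F \<Longrightarrow> ((\<lambda>s. X s j c) \<longlongrightarrow> Y j c) F"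
  by (rule continuous_on_tendsto_compose[OF cont_coord2[of UNIV j c]]) auto



lemma sol_const:
  assumes T: "\<And>i. T i > 1" and sol: "solution (mk n E T) X0 X" and X0: "X0 \<in> Mtot (mk n E T)"
    and t: "t \<ge> 0"
  shows "X t = X0"
proof -
  let ?N = "mk n E T"
  have XM: "\<And>s. s \<ge> 0 \<Longrightarrow> X s \<in> Mtot ?N" using sol by (simp add: solution_def)
  have "jump ?N X0 = X0" by (intro jump_mk) (rule Mtot_mk_lt[OF X0 T])
  then have X00: "X 0 = X0"
    using sol by (simp add: solution_def)
  have leftc: "((\<lambda>s. X s j c) \<longlongrightarrow> X u j c) (at_left u)" if u: "u > 0" and j: "j < n" for u j c
  proof -
    obtain Y where Y: "(X \<longlongrightarrow> Y) (at_left u)" "X u = jump ?N Y"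
      using sol u by (auto simp: solution_def)
    have "Y k 0 \<le> 1" if k: "k < n" for k
    proof (rule tendsto_upperbound[OF tendsto_coord2[OF Y(1)]])
      have "\<forall>\<^sub>F s in at_left u. s > 0" using eventually_at_left_real[of 0 u] u by (auto elim: eventually_mono)
      then show "\<forall>\<^sub>F s in at_left u. X s k 0 \<le> 1"
      proof eventually_elim
        case (elim s) then show ?case using XM[of s] Mtot_mk_le[of "X s" n E T k] k by simp
      qed
    qed simp
    then have "jump ?N Y = Y" using T by (intro jump_mk) (meson le_less_trans)
    then show ?thesis using Y(2) tendsto_coord2[OF Y(1), of j c] by simp
  qed
  have "X t j 0 = X0 j 0" if j: "j < n" for j
  proof -
    define g where "g = (\<lambda>s. X s j 0)"
    have der: "(g has_real_derivative 0) (at s within {s..})" if "s \<ge> 0" for s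
      using sol that j by (simp add: solution_def g_def)
    have "continuous_on {0..t} g"
    proof (rule continuous_on_eq_continuous_within[THEN iffD2], rule ballI)
      fix x assume x: "x \<in> {0..t}"
      have x0: "0 \<le> x" using x by simp
      have cr: "continuous (at x within {x..}) g" by (rule DERIV_continuous[OF der[OF x0]])
      show "continuous (at x within {0..t}) g"
      proof (cases "x = 0")
        case True then show ?thesis using cr by (auto intro: continuous_within_subset)
      next
        case False
        with x0 have x0: "x > 0" by auto
        have "(g \<longlongrightarrow> g x) (at_left x)" using leftc[OF x0 j] by (simp add: g_def)
        moreover have "(g \<longlongrightarrow> g x) (at_right x)"
          using cr unfolding continuous_within by (rule tendsto_within_subset) auto
        ultimately have "continuous (at x) g"
          by (simp add: continuous_def filterlim_at_split)
        then show ?thesis by (rule continuous_at_imp_continuous_within)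
      qed
    qed
    then have "g t = g 0" using t der by (intro rderiv_zero_const) auto
    then show ?thesis using X00 by (simp add: g_def)
  qed
  then show ?thesis using XM[OF t] X0 by (intro Mtot_mk_eq) auto
qed



lemma admissible_mk:
  assumes n: "n \<ge> 2" and T: "\<And>i. T i > 1" and E: "\<And>i. i < n \<Longrightarrow> \<exists>j<n. j \<noteq> i \<and> E i j"
  shows "admissible (mk n E T)"
  unfolding admissible_def
proof (intro conjI allI impI ballI)
  let ?N = "mk n E T"
  fix X0 assume X0: "X0 \<in> Mtot ?N"
  have J: "jump ?N X0 = X0" by (intro jump_mk) (rule Mtot_mk_lt[OF X0 T])
  show "\<exists>X. solution ?N X0 X"
    by (rule exI[of _ "\<lambda>_. X0"]) (auto simp: solution_def X0 J intro!: exI[of _ X0])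
  fix X Y and t :: real assume "solution ?N X0 X" "solution ?N X0 Y" "t \<ge> 0"
  then show "X t = Y t" using sol_const[OF T _ X0] by metis
next
  show "lipschitz_field (dim (mk n E T) i) (sp (mk n E T) i) (fld (mk n E T) i)" for i
    by (auto simp: lipschitz_field_def edist_def intro!: exI[of _ 0])
next
  fix i assume "i < nn (mk n E T)" then show "\<exists>j<nn (mk n E T). j \<noteq> i \<and> nz (mk n E T) i j" using E by simp
qed (use n T compact_I1 manifold_I1 I1_ne in \<open>simp_all, meson less_trans zero_less_one\<close>)




definition EN :: "nat \<Rightarrow> nat \<Rightarrow> bool" where
  "EN i j \<longleftrightarrow> (i = 0 \<and> (j = 1 \<or> j = 2)) \<or> ((i = 1 \<or> i = 2) \<and> j = 0)"
definition EN' :: "nat \<Rightarrow> nat \<Rightarrow> bool" where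
  "EN' i j \<longleftrightarrow> (i = 0 \<and> j = 1) \<or> (i = 3 \<and> j = 2) \<or> ((i = 1 \<or> i = 2) \<and> (j = 0 \<or> j = 3))"
definition TT :: "nat \<Rightarrow> real" where
  "TT i = (if i = 2 then 3 else 2)"

definition "N1 = mk 3 EN TT"
definition "N2 = mk 4 EN' TT"

lemma lt3: "(i::nat) < 3 \<longleftrightarrow> i = 0 \<or> i = 1 \<or> i = 2" by auto
lemma lt4: "(i::nat) < 4 \<longleftrightarrow> i = 0 \<or> i = 1 \<or> i = 2 \<or> i = 3" by auto

lemma sameF_mk: "sameF (mk n E T) i (mk n' E' T') i' \<longleftrightarrow> T i = T' i'"
  by (simp add: sameF_def)

lemma si1: "\<not> struct_ident N1 i j"
  by (auto simp: struct_ident_def N1_def sameF_mk EN_def TT_def lt3)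

lemma si2: "struct_ident N2 i j \<longleftrightarrow> (i = 0 \<and> j = 3) \<or> (i = 3 \<and> j = 0)"
  by (auto simp: struct_ident_def N2_def sameF_mk EN'_def TT_def lt4)

lemma parts1: "parts N1 = {{0},{1},{2}}"
proof -
  have "homog_part N1 A \<longleftrightarrow> A = {0} \<or> A = {1} \<or> A = {2}" for A
  proof
    assume h: "homog_part N1 A"
    then have A: "A \<noteq> {}" "A \<subseteq> {..<3}" "\<And>i j. i \<in> A \<Longrightarrow> j \<in> A \<Longrightarrow> i = j"
      using si1 by (auto simp: homog_part_def neurons_def N1_def)
    then obtain i where "A = {i}" "i < 3" by blast
    then show "A = {0} \<or> A = {1} \<or> A = {2}" by (auto simp: lt3)
  next
    assume "A = {0} \<or> A = {1} \<or> A = {2}"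
    then show "homog_part N1 A" using si1
      by (auto simp: homog_part_def neurons_def N1_def)
  qed
  then show ?thesis by (auto simp: parts_def)
qed


lemma parts2: "parts N2 = {{0,3},{1},{2}}"
proof -
  have P: "B \<subseteq> {0,3} \<or> B = {1} \<or> B = {2}"
    if sub: "B \<subseteq> {..<4}" and pw: "\<And>i j. i \<in> B \<Longrightarrow> j \<in> B \<Longrightarrow> i \<noteq> j \<Longrightarrow> struct_ident N2 i j" for B
  proof (cases "B \<subseteq> {0,3}")
    case False
    then obtain k where k0: "k \<in> B" "k \<notin> {0,3}" by blast
    then have "k < 4" using sub by auto
    then have k: "k \<in> B" "k = 1 \<or> k = 2" using k0 by (auto simp: lt4)
    have "j = k" if j: "j \<in> B" for j
    proof (rule ccontr)
      assume "j \<noteq> k"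
      then have "struct_ident N2 j k" using pw j k(1) by blast
      then show False using k(2) unfolding si2 by presburger
    qed
    then have "B = {k}" using k(1) by blast
    then show ?thesis using k(2) by blast
  qed simp
  have "homog_part N2 A \<longleftrightarrow> A = {0,3} \<or> A = {1} \<or> A = {2}" for A
  proof
    assume h: "homog_part N2 A"
    then have A: "A \<noteq> {}" "A \<subseteq> {..<4}" "\<And>i j. i \<in> A \<Longrightarrow> j \<in> A \<Longrightarrow> i \<noteq> j \<Longrightarrow> struct_ident N2 i j"
      and mx: "\<And>B. A \<subseteq> B \<Longrightarrow> B \<subseteq> {..<4} \<Longrightarrow> (\<forall>i\<in>B. \<forall>j\<in>B. i \<noteq> j \<longrightarrow> struct_ident N2 i j) \<Longrightarrow> B = A"
      by (auto simp: homog_part_def neurons_def N2_def)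
    have "A \<subseteq> {0,3} \<or> A = {1} \<or> A = {2}" by (rule P[OF A(2)], rule A(3))
    then show "A = {0,3} \<or> A = {1} \<or> A = {2}"
    proof (elim disjE)
      assume "A \<subseteq> {0,3}"
      then have "{0,3} = A" by (intro mx) (auto simp: si2)
      then show ?thesis by simp
    qed simp_all
  next
    assume a: "A = {0,3} \<or> A = {1} \<or> A = {2}"
    show "homog_part N2 A" unfolding homog_part_def
    proof (intro conjI allI impI)
      fix B assume B: "A \<subseteq> B" "B \<subseteq> neurons N2" "\<forall>i\<in>B. \<forall>j\<in>B. i \<noteq> j \<longrightarrow> struct_ident N2 i j"
      have "B \<subseteq> {..<4}" using B(2) by (simp add: neurons_def N2_def)
      from P[OF this] B(3) have "B \<subseteq> {0,3} \<or> B = {1} \<or> B = {2}" by blast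
      then show "B = A" using a B(1) B(3) si2 by auto
    qed (use a si2 in \<open>auto simp: neurons_def N2_def\<close>)
  qed
  then show ?thesis by (auto simp: parts_def)
qed




lemma min_unit_single:
  assumes A: "A \<noteq> {}" "finite A" and c: "\<And>h. h \<in> neurons N - A \<Longrightarrow> card {i\<in>A. nz N i h} \<le> 1"
  shows "min_unit_partition N A {A}"
proof -
  have up: "unit_partition N A {A}" using A c by (auto simp: unit_partition_def)
  have "card {A} \<le> card Q" if "unit_partition N A Q" for Q
  proof -
    have U: "\<Union>Q = A" using that by (simp add: unit_partition_def)
    then have "Q \<subseteq> Pow A" by auto
    then have "finite Q" using A(2) by (meson finite_Pow_iff finite_subset)
    moreover have "Q \<noteq> {}" using U A(1) by auto
    ultimately show ?thesis by (simp add: card_gt_0_iff Suc_leI)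
  qed
  then show ?thesis using up by (simp add: min_unit_partition_def)
qed

lemma card_single_le: "card {i\<in>{k}. P i} \<le> 1"
  by (rule order_trans[OF card_mono[of "{k}"]]) auto

lemma units_single: "units N (\<lambda>A. {A}) = parts N"
  by (auto simp: units_def)

lemma uc1: "unit_choice N1 (\<lambda>A. {A})"
  unfolding unit_choice_def parts1
  by (auto intro!: min_unit_single card_single_le)

lemma c03: "h \<in> neurons N2 - {0,3} \<Longrightarrow> card {i\<in>{0::nat,3}. nz N2 i h} \<le> 1"
proof -
  assume h: "h \<in> neurons N2 - {0,3}"
  then have "h = 1 \<or> h = 2" by (auto simp: neurons_def N2_def lt4)
  then have "{i\<in>{0::nat,3}. nz N2 i h} = (if h = 1 then {0} else {3})"
    by (auto simp: N2_def EN'_def)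
  then show ?thesis by simp
qed

lemma uc2: "unit_choice N2 (\<lambda>A. {A})"
  unfolding unit_choice_def parts2
  by (auto intro!: min_unit_single card_single_le c03)

lemma unit_delta_mk: "unit_delta (mk n E T) U B = (\<lambda>_. if \<exists>i\<in>U. \<exists>h\<in>B. E i h then 1 else 0)"
proof (cases "\<exists>i\<in>U. \<exists>h\<in>B. E i h")
  case True
  define i where "i = (SOME i. i \<in> U \<and> (\<exists>h\<in>B. E i h))"
  have i: "i \<in> U \<and> (\<exists>h\<in>B. E i h)" unfolding i_def
    by (rule someI_ex) (use True in blast)
  define h where "h = (SOME h. h \<in> B \<and> E i h)"
  have h: "h \<in> B \<and> E i h" unfolding h_def
    by (rule someI_ex) (use i in blast)
  show ?thesis using True h
    by (simp add: unit_delta_def Let_def fun_eq_iff flip: i_def h_def)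
qed (auto simp: unit_delta_def)

definition phi :: "nat set \<Rightarrow> nat set" where
  "phi U = (if U = {0} then {0,3} else U)"

lemma syn_equiv12: "syn_equiv N1 N2"
  unfolding syn_equiv_def
proof (intro exI conjI)
  show "unit_choice N1 (\<lambda>A. {A})" by (rule uc1)
  show "unit_choice N2 (\<lambda>A. {A})" by (rule uc2)
  show "card (parts N1) = card (parts N2)" by (simp add: parts1 parts2)
  show "card (units N1 (\<lambda>A. {A})) = card (units N2 (\<lambda>A. {A}))" by (simp add: parts1 parts2 units_single)
  show "bij_betw phi (units N1 (\<lambda>A. {A})) (units N2 (\<lambda>A. {A}))"
    by (simp add: parts1 parts2 units_single bij_betw_def phi_def insert_commute)
  show "bij_betw phi (parts N1) (parts N2)"
    by (simp add: parts1 parts2 units_single bij_betw_def phi_def insert_commute)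
  show "\<forall>B\<in>parts N1. phi ` {B} = {phi B}" by simp
  show "\<forall>U\<in>units N1 (\<lambda>A. {A}). \<forall>B\<in>parts N1. \<forall>h\<in>B. \<forall>x\<in>sp N1 h.
        unit_delta N1 U B x = unit_delta N2 (phi U) (phi B) x"
    unfolding parts1 units_single by (simp add: N1_def N2_def unit_delta_mk phi_def EN_def EN'_def)
  show "\<forall>U\<in>units N1 (\<lambda>A. {A}). \<forall>i\<in>U. \<forall>i'\<in>phi U. sameF N1 i N2 i'"
    unfolding parts1 units_single by (simp add: N1_def N2_def sameF_mk phi_def TT_def)
qed

lemma dale1: "dale N1"
  by (simp add: dale_def excitatory_def N1_def)

lemma adm1: "admissible N1"
  unfolding N1_def
proof (rule admissible_mk)
  fix i :: nat assume "i < 3"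
  then have "i = 0 \<or> i = 1 \<or> i = 2" by auto
  then show "\<exists>j<3. j \<noteq> i \<and> EN i j"
  proof (elim disjE)
    assume "i = 0" then show ?thesis by (intro exI[of _ 1]) (simp add: EN_def)
  next
    assume "i = 1" then show ?thesis by (intro exI[of _ 0]) (simp add: EN_def)
  next
    assume "i = 2" then show ?thesis by (intro exI[of _ 0]) (simp add: EN_def)
  qed
qed (simp_all add: TT_def)

lemma adm2: "admissible N2"
  unfolding N2_def
proof (rule admissible_mk)
  fix i :: nat assume "i < 4"
  then have "i = 0 \<or> i = 1 \<or> i = 2 \<or> i = 3" by auto
  then show "\<exists>j<4. j \<noteq> i \<and> EN' i j"
  proof (elim disjE)
    assume "i = 0" then show ?thesis by (intro exI[of _ 1]) (simp add: EN'_def)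
  next
    assume "i = 1" then show ?thesis by (intro exI[of _ 0]) (simp add: EN'_def)
  next
    assume "i = 2" then show ?thesis by (intro exI[of _ 0]) (simp add: EN'_def)
  next
    assume "i = 3" then show ?thesis by (intro exI[of _ 2]) (simp add: EN'_def)
  qed
qed (simp_all add: TT_def)




definition e4 :: "real \<times> real \<times> real \<times> real \<Rightarrow> nat \<Rightarrow> nat \<Rightarrow> real" where
  "e4 v = (\<lambda>i c. if c = 0 then (if i = 0 then fst v else if i = 1 then fst (snd v)
      else if i = 2 then fst (snd (snd v)) else if i = 3 then snd (snd (snd v)) else 0) else 0)"

definition p4 :: "(nat \<Rightarrow> nat \<Rightarrow> real) \<Rightarrow> real \<times> real \<times> real \<times> real" where
  "p4 X = (X 0 0, X 1 0, X 2 0, 0)"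

lemma cont_e4: "continuous_on S e4"
proof (intro continuous_on_coordinatewise_then_product)
  fix i c
  show "continuous_on S (\<lambda>v. e4 v i c)"
    by (cases "c = 0"; cases "i = 0"; cases "i = 1"; cases "i = 2"; cases "i = 3")
       (simp_all add: e4_def continuous_intros)
qed

lemma cont_p4: "continuous_on S p4"
  unfolding p4_def by (intro continuous_intros cont_coord2)

definition S4 :: "(real \<times> real \<times> real \<times> real) set" where
  "S4 = {0<..<1} \<times> {0<..<1} \<times> {0<..<1} \<times> {0<..<1}"

lemma open_S4: "open S4"
  unfolding S4_def by (intro open_Times open_greaterThanLessThan)

lemma e4_Mtot: "v \<in> S4 \<Longrightarrow> e4 v \<in> Mtot N2"
  by (auto simp: S4_def Mtot_def N2_def e4_def I1_def)

lemma inj_e4: "inj_on e4 S4"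
proof (rule inj_onI)
  fix v w assume "e4 v = e4 w"
  then have "e4 v 0 0 = e4 w 0 0" "e4 v 1 0 = e4 w 1 0" "e4 v 2 0 = e4 w 2 0" "e4 v 3 0 = e4 w 3 0"
    by simp_all
  then show "v = w" by (simp add: e4_def prod_eq_iff)
qed

lemma inj_p4: "inj_on p4 (Mtot N1)"
proof (rule inj_onI)
  fix X Y assume X: "X \<in> Mtot N1" and Y: "Y \<in> Mtot N1" and e: "p4 X = p4 Y"
  show "X = Y" using X Y unfolding N1_def
  proof (rule Mtot_mk_eq)
    fix j :: nat assume "j < 3"
    then have "j = 0 \<or> j = 1 \<or> j = 2" by auto
    then show "X j 0 = Y j 0" using e by (auto simp: p4_def)
  qed
qed

lemma not_embeds: "\<not> embeds N2 N1"
proof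
  assume "embeds N2 N1"
  then obtain \<psi> where c: "continuous_on (Mtot N2) \<psi>" and inj: "inj_on \<psi> (Mtot N2)"
    and im: "\<psi> ` Mtot N2 \<subseteq> Mtot N1"
    unfolding embeds_def by blast
  define g where "g = (\<lambda>v. p4 (\<psi> (e4 v)))"
  have eS: "e4 ` S4 \<subseteq> Mtot N2" using e4_Mtot by auto
  have cg: "continuous_on S4 g" unfolding g_def
    by (rule continuous_on_compose2[OF cont_p4[of UNIV] continuous_on_compose2[OF c cont_e4 eS]]) simp
  have ig: "inj_on g S4"
  proof (rule inj_onI)
    fix v w assume v: "v \<in> S4" and w: "w \<in> S4" and "g v = g w"
    then have "p4 (\<psi> (e4 v)) = p4 (\<psi> (e4 w))" by (simp add: g_def)
    moreover have "\<psi> (e4 v) \<in> Mtot N1" "\<psi> (e4 w) \<in> Mtot N1" using im e4_Mtot[OF v] e4_Mtot[OF w] by auto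
    ultimately have "\<psi> (e4 v) = \<psi> (e4 w)" using inj_p4 by (auto dest: inj_onD)
    then show "v = w" using inj_onD[OF inj _ e4_Mtot[OF v] e4_Mtot[OF w]] inj_onD[OF inj_e4 _ v w] by blast
  qed
  have og: "open (g ` S4)" by (rule invariance_of_domain[OF cg open_S4 ig])
  have last0: "snd (snd (snd z)) = 0" if "z \<in> g ` S4" for z
    using that by (auto simp: g_def p4_def)
  define q where "q = g (1/2, 1/2, 1/2, 1/2)"
  have q: "q \<in> g ` S4" by (auto simp: q_def S4_def)
  then obtain e where e: "e > 0" "ball q e \<subseteq> g ` S4" using og open_contains_ball by blast
  define q' where "q' = q + (0, 0, 0, e/2)"
  have "dist q q' = e/2" using e by (simp add: q'_def dist_norm norm_Pair)
  then have "q' \<in> g ` S4" using e by auto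
  then have "snd (snd (snd q')) = 0" by (rule last0)
  moreover have "snd (snd (snd q)) = 0" using q by (rule last0)
  ultimately show False using e by (simp add: q'_def)
qed

theorem mainTheorem6:
  shows "\<exists>N. admissible N \<and> dale N \<and> \<not> dynamical_optimum N"
proof (intro exI conjI)
  show "admissible N1" by (rule adm1)
  show "dale N1" by (rule dale1)
  show "\<not> dynamical_optimum N1"
    unfolding dynamical_optimum_def using adm2 syn_equiv12 not_embeds by blast
qed



end
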